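(* Let $H=(V,E)$ be a hypergraph whose vertex set $V$ is a partition of $[n]$ into sets of cardinality at least $2$, and let $D=\{\bar i_I\}_{I\in V}$ with $\bar i_I\in I$ for each $I\in V$. Then $\mathrm{MC}^H_\le(D)$ is full-dimensional in $\mathbb{R}^{\mathcal{J}^H_\le(D)}$.
   Context: Let $n$ be a positive integer, $[n]=\{1,\dots,n\}$. A hypergraph $H=(V,E)$ here has as vertex set $V$ a family of pairwise disjoint subsets of $[n]$, each of cardinality at least $2$, and hyperedge set $E$ consisting of subsets $e\subseteq V$ with $|e|\ge 2$. Write $L(V)=\{\{I\}: I\in V\}$. For a nonempty $e\subseteq V$, $\mathcal{J}^e$ denotes the family of sets $J\subseteq \bigcup_{I\in e} I$ with $|J\cap I|=1$ for every $I\in e$. Let $\mathcal{J}^H=\bigcup_{e\in L(V)\cup E}\mathcal{J}^e$. For a vector $v$ indexed by sets, write $v_i=v_{\{i\}}$ and $v(A)=\sum_{i\in A}v_i$. For $D$ as in the claim, $\mathcal{J}^H_\le(D)=\{J\in\mathcal{J}^H: J\subseteq[n]\setminus D\}$ and $\mathrm{MC}^H_\le(D)=\operatorname{conv}\{v\in\{0,1\}^{\mathcal{J}^H_\le(D)}: v(I\setminus D)\le 1\ \forall I\in V;\ v_J=\prod_{i\in J}v_i\ \forall J\in\mathcal{J}^H_\le(D), |J|>1\}$. *)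

theory Defs
  imports Complex_Main
begin

text \<open>Vectors in the space indexed by a finite family S of sets of naturals are
represented as functions nat set => real that vanish outside S.\<close>

definition Jfam :: "nat set set \<Rightarrow> nat set set" where
  "Jfam e = {J. J \<subseteq> \<Union>e \<and> (\<forall>I\<in>e. card (J \<inter> I) = 1)}"

definition JH :: "nat set set \<Rightarrow> nat set set set \<Rightarrow> nat set set" where
  "JH V E = (\<Union>e \<in> {{I} | I. I \<in> V} \<union> E. Jfam e)"

definition JH_le :: "nat \<Rightarrow> nat set set \<Rightarrow> nat set set set \<Rightarrow> nat set \<Rightarrow> nat set set" where
  "JH_le n V E D = {J \<in> JH V E. J \<subseteq> {1..n} - D}"

definition vsum :: "(nat set \<Rightarrow> real) \<Rightarrow> nat set \<Rightarrow> real" where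
  "vsum v A = (\<Sum>i\<in>A. v {i})"

definition MC_points :: "nat \<Rightarrow> nat set set \<Rightarrow> nat set set set \<Rightarrow> nat set \<Rightarrow> (nat set \<Rightarrow> real) set" where
  "MC_points n V E D = {v.
      (\<forall>J. J \<notin> JH_le n V E D \<longrightarrow> v J = 0) \<and>
      (\<forall>J \<in> JH_le n V E D. v J \<in> {0, 1}) \<and>
      (\<forall>I \<in> V. vsum v (I - D) \<le> 1) \<and>
      (\<forall>J \<in> JH_le n V E D. card J > 1 \<longrightarrow> v J = (\<Prod>i\<in>J. v {i}))}"

definition conv_hull_fun :: "('a \<Rightarrow> real) set \<Rightarrow> ('a \<Rightarrow> real) set" where
  "conv_hull_fun X = {v. \<exists>F c. finite F \<and> F \<noteq> {} \<and> F \<subseteq> X \<and> (\<forall>x\<in>F. c x \<ge> 0) \<and>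
       sum c F = 1 \<and> v = (\<lambda>J. \<Sum>x\<in>F. c x * x J)}"

definition aff_hull_fun :: "('a \<Rightarrow> real) set \<Rightarrow> ('a \<Rightarrow> real) set" where
  "aff_hull_fun X = {v. \<exists>F c. finite F \<and> F \<noteq> {} \<and> F \<subseteq> X \<and>
       sum c F = 1 \<and> v = (\<lambda>J. \<Sum>x\<in>F. c x * x J)}"

definition MC_le :: "nat \<Rightarrow> nat set set \<Rightarrow> nat set set set \<Rightarrow> nat set \<Rightarrow> (nat set \<Rightarrow> real) set" where
  "MC_le n V E D = conv_hull_fun (MC_points n V E D)"

definition full_dimensional_in :: "'a set \<Rightarrow> ('a \<Rightarrow> real) set \<Rightarrow> bool" where
  "full_dimensional_in S P \<longleftrightarrow> aff_hull_fun P = {v. \<forall>J. J \<notin> S \<longrightarrow> v J = 0}"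

end

theory Submission
  imports Defs
begin

lemma aff_mem: "x \<in> X \<Longrightarrow> x \<in> aff_hull_fun X"
  unfolding aff_hull_fun_def
  by (rule CollectI, rule exI[of _ "{x}"], rule exI[of _ "\<lambda>_. 1"]) auto

lemma conv_mem: "x \<in> X \<Longrightarrow> x \<in> conv_hull_fun X"
  unfolding conv_hull_fun_def
  by (rule CollectI, rule exI[of _ "{x}"], rule exI[of _ "\<lambda>_. 1"]) auto

lemma aff_comb:
  assumes "u \<in> aff_hull_fun X" "w \<in> aff_hull_fun X"
  shows "(\<lambda>J. a * u J + (1-a) * w J) \<in> aff_hull_fun X"
proof -
  obtain F c where F: "finite F" "F \<noteq> {}" "F \<subseteq> X" "sum c F = 1" "u = (\<lambda>J. \<Sum>x\<in>F. c x * x J)"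
    using assms(1) unfolding aff_hull_fun_def by blast
  obtain G d where G: "finite G" "G \<noteq> {}" "G \<subseteq> X" "sum d G = 1" "w = (\<lambda>J. \<Sum>x\<in>G. d x * x J)"
    using assms(2) unfolding aff_hull_fun_def by blast
  define c' where "c' x = (if x \<in> F then c x else 0)" for x
  define d' where "d' x = (if x \<in> G then d x else 0)" for x
  define e where "e x = a * c' x + (1-a) * d' x" for x
  have fin: "finite (F \<union> G)" using F G by auto
  have sF: "\<And>f. (\<Sum>x\<in>F \<union> G. (if x \<in> F then f x else 0)) = sum f F"
    using sum.inter_restrict[OF fin, of _ F, symmetric] by (simp add: Int_absorb2)
  have sG: "\<And>f. (\<Sum>x\<in>F \<union> G. (if x \<in> G then f x else 0)) = sum f G"
    using sum.inter_restrict[OF fin, of _ G, symmetric] by (simp add: Int_absorb2)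
  have s1: "sum e (F \<union> G) = 1"
    unfolding e_def sum.distrib sum_distrib_left[symmetric] c'_def d'_def sF sG F(4) G(4) by simp
  have s2: "(\<lambda>J. a * u J + (1-a) * w J) = (\<lambda>J. \<Sum>x\<in>F \<union> G. e x * x J)"
  proof
    fix J
    have "(\<Sum>x\<in>F \<union> G. e x * x J) = a * (\<Sum>x\<in>F \<union> G. c' x * x J) + (1-a) * (\<Sum>x\<in>F \<union> G. d' x * x J)"
      unfolding e_def by (simp add: distrib_right sum.distrib sum_distrib_left mult.assoc)
    also have "(\<Sum>x\<in>F \<union> G. c' x * x J) = u J"
      unfolding F(5) sF[of "\<lambda>x. c x * x J", symmetric] by (rule sum.cong) (auto simp: c'_def)
    also have "(\<Sum>x\<in>F \<union> G. d' x * x J) = w J"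
      unfolding G(5) sG[of "\<lambda>x. d x * x J", symmetric] by (rule sum.cong) (auto simp: d'_def)
    finally show "a * u J + (1-a) * w J = (\<Sum>x\<in>F \<union> G. e x * x J)" by simp
  qed
  show ?thesis unfolding aff_hull_fun_def
    using fin F G s1 s2 by blast
qed

locale lin =
  fixes L :: "('a \<Rightarrow> real) set"
  assumes zero: "(\<lambda>_. 0) \<in> L"
    and comb: "\<And>u w a. u \<in> L \<Longrightarrow> w \<in> L \<Longrightarrow> (\<lambda>J. a * u J + (1-a) * w J) \<in> L"
begin

lemma scale: "u \<in> L \<Longrightarrow> (\<lambda>J. a * u J) \<in> L"
  using comb[OF _ zero, of u a] by simp

lemma add: "u \<in> L \<Longrightarrow> w \<in> L \<Longrightarrow> (\<lambda>J. u J + w J) \<in> L"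
  using comb[OF scale[of u 2] scale[of w 2], of "1/2"] by simp

lemma diff: "u \<in> L \<Longrightarrow> w \<in> L \<Longrightarrow> (\<lambda>J. u J - w J) \<in> L"
  using add[OF _ scale[of w "-1"], of u] by simp

lemma sums: "finite A \<Longrightarrow> (\<And>k. k \<in> A \<Longrightarrow> f k \<in> L) \<Longrightarrow> (\<lambda>J. \<Sum>k\<in>A. f k J) \<in> L"
proof (induction A rule: finite_induct)
  case empty
  then show ?case using zero by simp
next
  case (insert x F)
  then show ?case using add[of "f x" "\<lambda>J. \<Sum>k\<in>F. f k J"] by simp
qed

end

theorem proposition3p3:
  fixes n :: nat and V :: "nat set set" and E :: "nat set set set" and D :: "nat set"
  assumes "n \<ge> 1"
    and "\<Union>V = {1..n}"
    and "\<forall>I\<in>V. \<forall>I'\<in>V. I \<noteq> I' \<longrightarrow> I \<inter> I' = {}"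
    and "\<forall>I\<in>V. card I \<ge> 2"
    and "\<forall>e\<in>E. e \<subseteq> V \<and> card e \<ge> 2"
    and "\<forall>I\<in>V. card (D \<inter> I) = 1"
    and "D \<subseteq> \<Union>V"
  shows "full_dimensional_in (JH_le n V E D) (MC_le n V E D)"
proof -
  define S where "S = JH_le n V E D"
  define X where "X = MC_points n V E D"
  have SX: "X = {v.
      (\<forall>J. J \<notin> S \<longrightarrow> v J = 0) \<and>
      (\<forall>J \<in> S. v J \<in> {0, 1}) \<and>
      (\<forall>I \<in> V. vsum v (I - D) \<le> 1) \<and>
      (\<forall>J \<in> S. card J > 1 \<longrightarrow> v J = (\<Prod>i\<in>J. v {i}))}"
    unfolding X_def S_def MC_points_def ..
  have Ssub: "\<And>K. K \<in> S \<Longrightarrow> K \<subseteq> {1..n} - D" unfolding S_def JH_le_def by auto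
  have finS: "finite S"
    by (rule finite_subset[of _ "Pow {1..n}"]) (use Ssub in auto)
  have finK: "\<And>K. K \<in> S \<Longrightarrow> finite K" using Ssub finite_subset by blast
  have finI: "\<And>I. I \<in> V \<Longrightarrow> finite I" using assms(2) finite_subset
    by (metis Union_upper finite_atLeastAtMost)
  have single: "\<And>K i. K \<in> S \<Longrightarrow> i \<in> K \<Longrightarrow> {i} \<in> S"
  proof -
    fix K i assume K: "K \<in> S" "i \<in> K"
    then have i: "i \<in> {1..n} - D" using Ssub by blast
    then have "i \<in> \<Union>V" using assms(2) by auto
    then obtain I where I: "I \<in> V" "i \<in> I" by blast
    have "{i} \<in> Jfam {I}" unfolding Jfam_def using I by auto
    then have "{i} \<in> JH V E" unfolding JH_def using I by blast
    then show "{i} \<in> S" unfolding S_def JH_le_def using i by auto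
  qed
  have cardle: "\<And>K I. K \<in> S \<Longrightarrow> I \<in> V \<Longrightarrow> card (K \<inter> I) \<le> 1"
  proof -
    fix K I assume K: "K \<in> S" and I: "I \<in> V"
    then obtain e where e: "e \<in> {{I} | I. I \<in> V} \<union> E" "K \<in> Jfam e"
      unfolding S_def JH_le_def JH_def by auto
    have eV: "e \<subseteq> V" using e(1) assms(5) by auto
    show "card (K \<inter> I) \<le> 1"
    proof (cases "I \<in> e")
      case True
      then show ?thesis using e(2) unfolding Jfam_def by auto
    next
      case False
      have "K \<inter> I = {}"
      proof (rule ccontr)
        assume "K \<inter> I \<noteq> {}"
        then obtain x where x: "x \<in> K" "x \<in> I" by auto
        then obtain I' where "I' \<in> e" "x \<in> I'" using e(2) unfolding Jfam_def by auto
        then have "I' \<in> V" "I' \<noteq> I" using eV False by auto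
        then have "I' \<inter> I = {}" using assms(3) I by blast
        then show False using x \<open>x \<in> I'\<close> by blast
      qed
      then show ?thesis by simp
    qed
  qed
  define chi where "chi K = (\<lambda>J. if J \<in> S \<and> J \<subseteq> K then (1::real) else 0)" for K
  have chiX: "\<And>K. K \<in> S \<Longrightarrow> chi K \<in> X"
  proof -
    fix K assume K: "K \<in> S"
    have c1: "\<forall>I \<in> V. vsum (chi K) (I - D) \<le> 1"
    proof
      fix I assume I: "I \<in> V"
      have fI: "finite (I - D)" using finI[OF I] by simp
      have "vsum (chi K) (I - D) = (\<Sum>i\<in>I - D. if i \<in> {i. {i} \<in> S \<and> i \<in> K} then 1 else 0)"
        unfolding vsum_def chi_def by (intro sum.cong) auto
      also have "\<dots> = card ((I - D) \<inter> {i. {i} \<in> S \<and> i \<in> K})"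
        using sum.inter_restrict[OF fI, of "\<lambda>_. (1::real)" "{i. {i} \<in> S \<and> i \<in> K}", symmetric] by (simp only: sum_constant mult_1_right)
      also have "\<dots> \<le> card (K \<inter> I)"
        by (intro of_nat_mono card_mono) (use finK[OF K] in auto)
      also have "\<dots> \<le> (1::real)" using cardle[OF K I] by simp
      finally show "vsum (chi K) (I - D) \<le> 1" .
    qed
    have c2: "\<forall>J \<in> S. card J > 1 \<longrightarrow> chi K J = (\<Prod>i\<in>J. chi K {i})"
    proof (intro ballI impI)
      fix J assume J: "J \<in> S" "card J > 1"
      have eq: "(\<Prod>i\<in>J. chi K {i}) = (\<Prod>i\<in>J. if i \<in> K then 1 else 0)"
        by (intro prod.cong) (auto simp: chi_def single[OF J(1)])
      show "chi K J = (\<Prod>i\<in>J. chi K {i})"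
      proof (cases "J \<subseteq> K")
        case True
        then show ?thesis unfolding eq using J by (auto simp: chi_def intro!: prod.neutral)
      next
        case False
        then obtain i where "i \<in> J" "i \<notin> K" by auto
        then show ?thesis unfolding eq using J finK[OF J(1)] False
          by (auto simp: chi_def prod_zero_iff)
      qed
    qed
    show "chi K \<in> X" unfolding SX using c1 c2 by (auto simp: chi_def)
  qed
  have zeroX: "(\<lambda>_. 0) \<in> X"
  proof -
    have "\<forall>J \<in> S. card J > 1 \<longrightarrow> (0::real) = (\<Prod>i\<in>J. 0)"
    proof (intro ballI impI)
      fix J :: "nat set" assume "card J > 1"
      then have "finite J" "J \<noteq> {}" using card.infinite by fastforce+
      then show "(0::real) = (\<Prod>i\<in>J. 0)" by (simp add: card_gt_0_iff)
    qed
    then show ?thesis unfolding SX by (auto simp: vsum_def)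
  qed
  define L where "L = aff_hull_fun (MC_le n V E D)"
  have inL: "\<And>x. x \<in> X \<Longrightarrow> x \<in> L"
    unfolding L_def MC_le_def X_def by (intro aff_mem conv_mem)
  interpret lin L
    by unfold_locales (use inL zeroX aff_comb in \<open>auto simp: L_def\<close>)
  define unit where "unit K = (\<lambda>J. if J = K then (1::real) else 0)" for K :: "nat set"
  have unitL: "K \<in> S \<Longrightarrow> unit K \<in> L" for K
  proof (induction K rule: measure_induct_rule[of card])
    case (less K)
    have IH: "unit M \<in> L" if "M \<in> {M \<in> S. M \<subset> K}" for M
      using that less finK psubset_card_mono by auto
    have s: "(\<lambda>J. \<Sum>M\<in>{M \<in> S. M \<subset> K}. unit M J) \<in> L"
      by (rule sums) (use finS IH in auto)
    have "unit K = (\<lambda>J. chi K J - (\<Sum>M\<in>{M \<in> S. M \<subset> K}. unit M J))"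
    proof
      fix J
      have "(\<Sum>M\<in>{M \<in> S. M \<subset> K}. unit M J) = (if J \<in> {M \<in> S. M \<subset> K} then 1 else 0)"
        unfolding unit_def using finS by (simp add: sum.delta)
      then show "unit K J = chi K J - (\<Sum>M\<in>{M \<in> S. M \<subset> K}. unit M J)"
        using less(2) unfolding unit_def chi_def by auto
    qed
    then show ?case using diff[OF inL[OF chiX[OF less(2)]] s] by simp
  qed
  have sub1: "aff_hull_fun (MC_le n V E D) \<subseteq> {v. \<forall>J. J \<notin> S \<longrightarrow> v J = 0}"
  proof
    fix v assume "v \<in> aff_hull_fun (MC_le n V E D)"
    then obtain F c where F: "F \<subseteq> MC_le n V E D" "v = (\<lambda>J. \<Sum>x\<in>F. c x * x J)"
      unfolding aff_hull_fun_def by blast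
    have z: "\<And>x J. x \<in> MC_le n V E D \<Longrightarrow> J \<notin> S \<Longrightarrow> x J = 0"
    proof -
      fix x J assume "x \<in> MC_le n V E D" "J \<notin> S"
      then obtain G d where "G \<subseteq> X" "x = (\<lambda>J. \<Sum>y\<in>G. d y * y J)"
        unfolding MC_le_def conv_hull_fun_def X_def by blast
      then show "x J = 0" using \<open>J \<notin> S\<close> unfolding SX by (auto intro!: sum.neutral)
    qed
    show "v \<in> {v. \<forall>J. J \<notin> S \<longrightarrow> v J = 0}" using F z by (auto intro!: sum.neutral)
  qed
  have sub2: "{v. \<forall>J. J \<notin> S \<longrightarrow> v J = 0} \<subseteq> L"
  proof
    fix w :: "nat set \<Rightarrow> real" assume w: "w \<in> {v. \<forall>J. J \<notin> S \<longrightarrow> v J = 0}"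
    have "w = (\<lambda>J. \<Sum>K\<in>S. w K * unit K J)"
    proof
      fix J
      show "w J = (\<Sum>K\<in>S. w K * unit K J)"
        unfolding unit_def using finS w by (simp add: if_distrib sum.delta cong: if_cong)
    qed
    moreover have "(\<lambda>J. \<Sum>K\<in>S. w K * unit K J) \<in> L"
      by (rule sums[OF finS]) (use scale unitL in auto)
    ultimately show "w \<in> L" by simp
  qed
  show ?thesis unfolding full_dimensional_in_def using sub1 sub2 S_def L_def by auto
qed

end
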